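(* Let $L$ be an oriented classical or virtual link represented by a signed Gauss diagram $D$, and let $\mathcal{FQ}(L)$ be the forbidden quiver obtained from $D$. Then $\mathcal{FQ}(L)$ is invariant under Reidemeister moves; in particular, the isomorphism class of $\mathcal{FQ}(L)$ as a directed graph with signed edges is an invariant of classical and virtual links.
   Context: An oriented (classical or virtual) link with $n$ components is represented by a signed Gauss diagram: $n$ oriented circles, one per component, together with a finite set of arrows, each arrow running from the point of a circle corresponding to the over-strand of a crossing to the point corresponding to the under-strand, and decorated with the sign $\pm 1$ of the crossing (its local writhe). Virtual links are equivalence classes of Gauss diagrams under the Gauss-diagram Reidemeister moves: R1 (add or delete an arrow whose two endpoints are adjacent on one circle, i.e. intersecting no other arrow), R2 (add or delete two arrows pointing in the same direction with opposite signs, whose heads are adjacent and whose tails are adjacent), and R3 (slide the endpoints of three arrows forming a triangle past one another). Classical links are those representable by planar diagrams. The forbidden moves are $F_H$: interchange two adjacent arrowheads on a circle, and $F_T$: interchange two adjacent arrow tails on a circle. Using forbidden moves together with Reidemeister moves, any Gauss diagram can be reduced to one in which no arrow has both endpoints on the same circle and, for each ordered pair $(j,k)$ of distinct circles, all arrows from circle $j$ to circle $k$ are parallel with the same sign (pairs of opposite sign having been cancelled by R2 moves). The forbidden quiver $\mathcal{FQ}(L)$ is obtained from such a reduced diagram by shrinking each circle to a vertex: its vertices are the components of $L$, and it has one arrow from $j$ to $k$ of sign $\varepsilon$ for each arrow of sign $\varepsilon$ from circle $j$ to circle $k$ in the reduced diagram. (Equivalently, $m$ parallel arrows of sign $\varepsilon$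 from $j$ to $k$ may be recorded as a single arrow with integer label $\varepsilon m$.) *)

theory Defs
  imports Main "HOL-Library.Multiset"
begin

text \<open>A signed Gauss diagram with n components is a list of n cyclic words
(one per oriented circle, read in the direction of the orientation).
Each letter is an arrow endpoint (label, sign, is_head): the label names
the arrow, the sign is the local writhe of the crossing, and is_head
tells whether this is the head (under-crossing point) or the tail
(over-crossing point) of the arrow.\<close>

type_synonym endpt = "nat \<times> int \<times> bool"
type_synonym gdiag = "endpt list list"

definition lbl :: "endpt \<Rightarrow> nat" where "lbl e = fst e"
definition sgn_of :: "endpt \<Rightarrow> int" where "sgn_of e = fst (snd e)"
definition is_head :: "endpt \<Rightarrow> bool" where "is_head e = snd (snd e)"

definition gd_wf :: "gdiag \<Rightarrow> bool" where
  "gd_wf D \<longleftrightarrow> (\<forall>e \<in> set (concat D). \<exists>\<epsilon> \<in> {1, -1}.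
      count_list (concat D) (lbl e, \<epsilon>, True) = 1 \<and>
      count_list (concat D) (lbl e, \<epsilon>, False) = 1 \<and>
      (\<forall>e' \<in> set (concat D). lbl e' = lbl e \<longrightarrow> sgn_of e' = \<epsilon>))"

definition cyc_adj :: "endpt list \<Rightarrow> endpt \<Rightarrow> endpt \<Rightarrow> bool" where
  "cyc_adj w x y \<longleftrightarrow> (\<exists>u v. w = u @ [x, y] @ v) \<or> (\<exists>u. w = y # u @ [x])"

definition adj :: "gdiag \<Rightarrow> endpt \<Rightarrow> endpt \<Rightarrow> bool" where
  "adj D x y \<longleftrightarrow> (\<exists>w \<in> set D. cyc_adj w x y)"

definition adj2 :: "gdiag \<Rightarrow> endpt \<Rightarrow> endpt \<Rightarrow> bool" where
  "adj2 D x y \<longleftrightarrow> adj D x y \<or> adj D y x"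

definition remove_arrows :: "nat set \<Rightarrow> gdiag \<Rightarrow> gdiag" where
  "remove_arrows A D = map (filter (\<lambda>e. lbl e \<notin> A)) D"

definition swap_ep :: "endpt \<Rightarrow> endpt \<Rightarrow> endpt \<Rightarrow> endpt" where
  "swap_ep x y e = (if e = x then y else if e = y then x else e)"

definition gd_iso :: "gdiag \<Rightarrow> gdiag \<Rightarrow> bool" where
  "gd_iso D D' \<longleftrightarrow>
     (\<exists>i < length D. D' = D[i := rotate1 (D ! i)]) \<or>
     (\<exists>f. inj_on f (lbl ` set (concat D)) \<and>
          D' = map (map (\<lambda>(a, \<epsilon>, h). (f a, \<epsilon>, h))) D)"

text \<open>R1 (deletion direction): delete an arrow whose endpoints are adjacent.\<close>
definition r1_del :: "gdiag \<Rightarrow> gdiag \<Rightarrow> bool" where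
  "r1_del D D' \<longleftrightarrow> (\<exists>a \<epsilon>. adj2 D (a, \<epsilon>, True) (a, \<epsilon>, False) \<and>
                        D' = remove_arrows {a} D)"

text \<open>R2 (deletion direction): delete two arrows pointing in the same direction
with opposite signs, whose heads are adjacent and whose tails are adjacent.\<close>
definition r2_del :: "gdiag \<Rightarrow> gdiag \<Rightarrow> bool" where
  "r2_del D D' \<longleftrightarrow> (\<exists>a b \<epsilon>. a \<noteq> b \<and> \<epsilon> \<in> {1, -1} \<and>
      adj2 D (a, \<epsilon>, True) (b, -\<epsilon>, True) \<and>
      adj2 D (a, \<epsilon>, False) (b, -\<epsilon>, False) \<and>
      D' = remove_arrows {a, b} D)"

text \<open>R3: three arrows 1,2,3 forming a triangle between three strands 1,2,3;
arrow k joins the two strands other than k, and p_ki is its endpoint on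
strand i.  Admissibility (realisability by a planar Reidemeister III move):
the over/under relation is acyclic (some strand is the top strand, carrying
two tails), and, writing sigma_i = +1 iff strand i meets strand i-1 before
strand i+1 (indices mod 3), and c_ij = the sign of the crossing of strands
i,j if i is over j and minus that sign otherwise (so that c_ij is the sign of
the cross product of the directions of strands i and j), one has
c12 s1 s2 = c23 s2 s3 = c31 s3 s1 (this common value is the orientation of
the triangle).\<close>
definition r3 :: "gdiag \<Rightarrow> gdiag \<Rightarrow> bool" where
  "r3 D D' \<longleftrightarrow> (\<exists>p12 p13 p21 p23 p31 p32 s1 s2 s3 :: int.
      lbl p12 = lbl p13 \<and> lbl p21 = lbl p23 \<and> lbl p31 = lbl p32 \<and>
      distinct [lbl p12, lbl p21, lbl p31] \<and>
      is_head p12 \<noteq> is_head p13 \<and> is_head p21 \<noteq> is_head p23 \<and>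
      is_head p31 \<noteq> is_head p32 \<and>
      sgn_of p12 = sgn_of p13 \<and> sgn_of p21 = sgn_of p23 \<and> sgn_of p31 = sgn_of p32 \<and>
      s1 \<in> {1, -1} \<and> s2 \<in> {1, -1} \<and> s3 \<in> {1, -1} \<and>
      (if s1 = 1 then adj D p21 p31 else adj D p31 p21) \<and>
      (if s2 = 1 then adj D p32 p12 else adj D p12 p32) \<and>
      (if s3 = 1 then adj D p13 p23 else adj D p23 p13) \<and>
      ((\<not> is_head p21 \<and> \<not> is_head p31) \<or> (\<not> is_head p12 \<and> \<not> is_head p32) \<or>
       (\<not> is_head p13 \<and> \<not> is_head p23)) \<and>
      (let c12 = (if is_head p31 then - sgn_of p31 else sgn_of p31);
           c23 = (if is_head p12 then - sgn_of p12 else sgn_of p12);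
           c31 = (if is_head p23 then - sgn_of p23 else sgn_of p23)
       in c12 * s1 * s2 = c23 * s2 * s3 \<and> c23 * s2 * s3 = c31 * s3 * s1) \<and>
      D' = map (map (swap_ep p21 p31 \<circ> swap_ep p12 p32 \<circ> swap_ep p13 p23)) D)"

text \<open>Forbidden moves: interchange two adjacent heads / two adjacent tails.\<close>
definition fh :: "gdiag \<Rightarrow> gdiag \<Rightarrow> bool" where
  "fh D D' \<longleftrightarrow> (\<exists>x y. is_head x \<and> is_head y \<and> x \<noteq> y \<and> adj D x y \<and>
                     D' = map (map (swap_ep x y)) D)"

definition ft :: "gdiag \<Rightarrow> gdiag \<Rightarrow> bool" where
  "ft D D' \<longleftrightarrow> (\<exists>x y. \<not> is_head x \<and> \<not> is_head y \<and> x \<noteq> y \<and> adj D x y \<and>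
                     D' = map (map (swap_ep x y)) D)"

definition reid_step :: "gdiag \<Rightarrow> gdiag \<Rightarrow> bool" where
  "reid_step D D' \<longleftrightarrow> gd_wf D \<and> gd_wf D' \<and>
     (gd_iso D D' \<or> r1_del D D' \<or> r2_del D D' \<or> r3 D D')"

text \<open>Equivalence of Gauss diagrams under Reidemeister moves (virtual link equivalence).\<close>
definition reid_equiv :: "gdiag \<Rightarrow> gdiag \<Rightarrow> bool" where
  "reid_equiv = equivclp reid_step"

definition forb_step :: "gdiag \<Rightarrow> gdiag \<Rightarrow> bool" where
  "forb_step D D' \<longleftrightarrow> reid_step D D' \<or> (gd_wf D \<and> gd_wf D' \<and> (fh D D' \<or> ft D D'))"

definition forb_equiv :: "gdiag \<Rightarrow> gdiag \<Rightarrow> bool" where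
  "forb_equiv = equivclp forb_step"

definition circ_of :: "gdiag \<Rightarrow> endpt \<Rightarrow> nat" where
  "circ_of D e = (LEAST k. k < length D \<and> e \<in> set (D ! k))"

text \<open>Arrows of the quiver obtained by shrinking each circle to a vertex:
one entry (j, k, sign) for each arrow with tail on circle j and head on circle k.\<close>
definition arrow_list :: "gdiag \<Rightarrow> (nat \<times> nat \<times> int) list" where
  "arrow_list D = concat (map (\<lambda>j. map (\<lambda>e. (j, circ_of D (lbl e, sgn_of e, True), sgn_of e))
                                      (filter (\<lambda>e. \<not> is_head e) (D ! j))) [0..<length D])"

definition quiver :: "gdiag \<Rightarrow> (nat \<times> nat \<times> int) multiset" where
  "quiver D = mset (arrow_list D)"

definition reduced :: "gdiag \<Rightarrow> bool" where
  "reduced D \<longleftrightarrow> gd_wf D \<and>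
     (\<forall>(j, k, \<epsilon>) \<in> set (arrow_list D). j \<noteq> k) \<and>
     (\<forall>(j, k, \<epsilon>) \<in> set (arrow_list D). \<forall>(j', k', \<epsilon>') \<in> set (arrow_list D).
         j = j' \<and> k = k' \<longrightarrow> \<epsilon> = \<epsilon>')"

end

theory Submission
  imports Defs
begin

lemma count_concat: "count_list (concat D) x = (\<Sum>k<length D. count_list (D!k) x)"
proof (induction D)
  case (Cons a D)
  have "(\<Sum>k<length (a#D). count_list ((a#D)!k) x) = count_list a x + (\<Sum>k<length D. count_list (D!k) x)"
    by (simp only: length_Cons sum.lessThan_Suc_shift nth_Cons_0 nth_Cons_Suc)
  then show ?case using Cons by simp
qed simp

lemma wf_once:
  assumes "gd_wf D" "x \<in> set (concat D)"
  shows "count_list (concat D) x = 1"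
proof -
  obtain \<epsilon> where "count_list (concat D) (lbl x, \<epsilon>, True) = 1"
     "count_list (concat D) (lbl x, \<epsilon>, False) = 1" "sgn_of x = \<epsilon>"
    using assms unfolding gd_wf_def by blast
  moreover have "x = (lbl x, sgn_of x, is_head x)" by (simp add: lbl_def sgn_of_def is_head_def)
  ultimately show ?thesis by (cases "is_head x") simp_all
qed

lemma word_count_le:
  assumes "k < length D"
  shows "count_list (D!k) x \<le> count_list (concat D) x"
  unfolding count_concat using assms
  by (intro member_le_sum) auto

lemma wf_word_unique:
  assumes "gd_wf D" "i < length D" "j < length D" "x \<in> set (D!i)" "x \<in> set (D!j)"
  shows "i = j"
proof (rule ccontr)
  assume ne: "i \<noteq> j"
  have c: "x \<in> set (concat D)" using assms(2,4) by (auto simp: set_concat)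
  have "count_list (D!i) x + count_list (D!j) x = (\<Sum>k\<in>{i,j}. count_list (D!k) x)"
    using ne by simp
  also have "\<dots> \<le> (\<Sum>k<length D. count_list (D!k) x)"
    using assms(2,3) by (intro sum_mono2) auto
  finally have "count_list (D!i) x + count_list (D!j) x \<le> 1"
    using wf_once[OF assms(1) c] count_concat[of D x] by linarith
  moreover have "count_list (D!i) x \<noteq> 0" "count_list (D!j) x \<noteq> 0"
    using assms(4,5) by (simp_all add: count_list_0_iff)
  ultimately show False by simp
qed

lemma wf_distinct:
  assumes "gd_wf D" "i < length D"
  shows "distinct (D!i)"
  unfolding distinct_count_atmost_1 count_mset
proof
  fix a
  show "count_list (D ! i) a = (if a \<in> set (D ! i) then 1 else 0)"
  proof (cases "a \<in> set (D!i)")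
    case True
    then have "a \<in> set (concat D)" using assms(2) by (auto simp: set_concat)
    then have "count_list (D!i) a \<le> 1" using wf_once[OF assms(1)] word_count_le[OF assms(2)] by metis
    moreover have "count_list (D!i) a \<noteq> 0" using True by (simp add: count_list_0_iff)
    ultimately show ?thesis using True by simp
  qed simp
qed

lemma in_concat_iff: "x \<in> set (concat D) \<longleftrightarrow> (\<exists>i<length D. x \<in> set (D!i))"
proof
  assume "x \<in> set (concat D)"
  then obtain w where w: "w \<in> set D" "x \<in> set w" by auto
  then obtain i where "i < length D" "D!i = w" by (auto simp: in_set_conv_nth)
  then show "\<exists>i<length D. x \<in> set (D!i)" using w by blast
next
  assume "\<exists>i<length D. x \<in> set (D!i)"
  then obtain i where "i < length D" "x \<in> set (D!i)" by blast
  then show "x \<in> set (concat D)" by (auto simp: set_concat)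
qed

lemma circ_of_eq:
  assumes "gd_wf D" "i < length D" "x \<in> set (D!i)"
  shows "circ_of D x = i"
proof -
  have "\<And>y. y < length D \<and> x \<in> set (D ! y) \<Longrightarrow> i \<le> y"
  proof -
    fix y assume "y < length D \<and> x \<in> set (D ! y)"
    then have "y = i" using wf_word_unique[of D y i x] assms by blast
    then show "i \<le> y" by simp
  qed
  moreover have "i < length D \<and> x \<in> set (D ! i)" using assms by blast
  ultimately show ?thesis unfolding circ_of_def by (rule Least_equality[rotated])
qed

lemma circ_of_lt:
  assumes "x \<in> set (concat D)" shows "circ_of D x < length D"
proof -
  from assms[unfolded in_concat_iff] obtain i where "i < length D" "x \<in> set (D!i)" by blast
  then have "i < length D \<and> x \<in> set (D!i)" by blast
  from LeastI[of "\<lambda>k. k < length D \<and> x \<in> set (D!k)", OF this]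
  show ?thesis unfolding circ_of_def by blast
qed

definition labels :: "gdiag \<Rightarrow> nat set" where
  "labels D = lbl ` set (concat D)"

definition sg :: "gdiag \<Rightarrow> nat \<Rightarrow> int" where
  "sg D l = sgn_of (SOME e. e \<in> set (concat D) \<and> lbl e = l)"

definition tc :: "gdiag \<Rightarrow> nat \<Rightarrow> nat" where
  "tc D l = circ_of D (l, sg D l, False)"

definition hc :: "gdiag \<Rightarrow> nat \<Rightarrow> nat" where
  "hc D l = circ_of D (l, sg D l, True)"

lemma ep_eta: "x = (lbl x, sgn_of x, is_head x)"
  by (simp add: lbl_def sgn_of_def is_head_def)

lemma wf_at:
  assumes "gd_wf D" "e \<in> set (concat D)"
  shows "\<exists>\<epsilon> \<in> {1, -1}.
      count_list (concat D) (lbl e, \<epsilon>, True) = 1 \<and>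
      count_list (concat D) (lbl e, \<epsilon>, False) = 1 \<and>
      (\<forall>e' \<in> set (concat D). lbl e' = lbl e \<longrightarrow> sgn_of e' = \<epsilon>)"
  using assms unfolding gd_wf_def by (rule bspec)

lemma sg_eq:
  assumes "gd_wf D" "e \<in> set (concat D)"
  shows "sg D (lbl e) = sgn_of e"
proof -
  obtain \<epsilon> where A: "\<forall>e'\<in>set (concat D). lbl e' = lbl e \<longrightarrow> sgn_of e' = \<epsilon>"
    using wf_at[OF assms] by blast
  define e0 where "e0 = (SOME e'. e' \<in> set (concat D) \<and> lbl e' = lbl e)"
  have "e0 \<in> set (concat D) \<and> lbl e0 = lbl e"
    unfolding e0_def by (rule someI[of _ e]) (use assms in simp)
  then have "sgn_of e0 = \<epsilon>" using A by blast
  moreover have "sgn_of e = \<epsilon>" using A assms(2) by blast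
  moreover have "sg D (lbl e) = sgn_of e0" unfolding sg_def e0_def by (rule refl)
  ultimately show ?thesis by simp
qed

lemma sg_pm:
  assumes "gd_wf D" "e \<in> set (concat D)"
  shows "sgn_of e \<in> {1, -1}"
proof -
  obtain \<epsilon> where "\<epsilon> \<in> {1, -1}" "\<forall>e'\<in>set (concat D). lbl e' = lbl e \<longrightarrow> sgn_of e' = \<epsilon>"
    using wf_at[OF assms] by blast
  then show ?thesis using assms(2) by auto
qed

lemma ends_exist:
  assumes "gd_wf D" "l \<in> labels D"
  shows "(l, sg D l, False) \<in> set (concat D) \<and> (l, sg D l, True) \<in> set (concat D)"
proof -
  obtain e where e: "e \<in> set (concat D)" "l = lbl e" using assms(2) by (auto simp: labels_def)
  obtain \<epsilon> where c: "count_list (concat D) (lbl e, \<epsilon>, True) = 1"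
     "count_list (concat D) (lbl e, \<epsilon>, False) = 1" and
     A: "\<forall>e'\<in>set (concat D). lbl e' = lbl e \<longrightarrow> sgn_of e' = \<epsilon>"
    using wf_at[OF assms(1) e(1)] by blast
  have "sgn_of e = \<epsilon>" using A e(1) by blast
  moreover have "sg D l = sgn_of e" using sg_eq[OF assms(1) e(1)] e(2) by simp
  moreover have "(lbl e, \<epsilon>, True) \<in> set (concat D)" "(lbl e, \<epsilon>, False) \<in> set (concat D)"
    using c by (metis count_notin zero_neq_one)+
  ultimately show ?thesis using e(2) by simp
qed

definition term_of :: "gdiag \<Rightarrow> nat \<Rightarrow> nat \<Rightarrow> nat \<Rightarrow> int" where
  "term_of D j k l = (if tc D l = j \<and> hc D l = k then sg D l else 0)"

definition S :: "gdiag \<Rightarrow> nat \<Rightarrow> nat \<Rightarrow> int" where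
  "S D j k = (\<Sum>l\<in>labels D. term_of D j k l)"

definition inv :: "gdiag \<Rightarrow> nat \<times> (nat \<Rightarrow> nat \<Rightarrow> int)" where
  "inv D = (length D, \<lambda>j k. if j = k then 0 else S D j k)"

lemma finite_labels: "finite (labels D)"
  by (simp add: labels_def)

definition ss :: "gdiag \<Rightarrow> gdiag \<Rightarrow> bool" where
  "ss D D' \<longleftrightarrow> length D' = length D \<and> (\<forall>i<length D. set (D'!i) = set (D!i))"

lemma ss_inv:
  assumes "ss D D'"
  shows "inv D' = inv D"
proof -
  have len: "length D' = length D" and st: "\<And>i. i < length D \<Longrightarrow> set (D'!i) = set (D!i)"
    using assms by (auto simp: ss_def)
  have c: "set (concat D') = set (concat D)"
  proof (rule set_eqI)
    fix x show "x \<in> set (concat D') \<longleftrightarrow> x \<in> set (concat D)"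
      unfolding in_concat_iff using len st by auto
  qed
  have l: "labels D' = labels D" unfolding labels_def c ..
  have sgq: "sg D' = sg D" unfolding sg_def[abs_def] c ..
  have "\<And>x k. (k < length D' \<and> x \<in> set (D'!k)) = (k < length D \<and> x \<in> set (D!k))"
    using len st by auto
  then have ci: "circ_of D' = circ_of D" unfolding circ_of_def[abs_def] by simp
  have e: "S D' = S D" unfolding S_def[abs_def] term_of_def tc_def hc_def l sgq ci ..
  show ?thesis unfolding inv_def len e ..
qed

lemma ss_refl: "ss D D" by (simp add: ss_def)

lemma ss_trans: "ss D1 D2 \<Longrightarrow> ss D2 D3 \<Longrightarrow> ss D1 D3" by (simp add: ss_def)

lemma swap_image:
  assumes "x \<in> A \<longleftrightarrow> y \<in> A"
  shows "swap_ep x y ` A = A"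
proof
  have mem: "swap_ep x y z \<in> A" if "z \<in> A" for z
    unfolding swap_ep_def using assms that by (cases "z = x"; cases "z = y") simp_all
  have iv: "swap_ep x y (swap_ep x y z) = z" for z
    unfolding swap_ep_def by (cases "z = x"; cases "z = y") simp_all
  show "swap_ep x y ` A \<subseteq> A" using mem by blast
  show "A \<subseteq> swap_ep x y ` A"
  proof
    fix z assume "z \<in> A"
    then have "swap_ep x y z \<in> A" by (rule mem)
    then show "z \<in> swap_ep x y ` A" using iv[of z] by (metis image_eqI)
  qed
qed

definition sw_ok :: "gdiag \<Rightarrow> endpt \<Rightarrow> endpt \<Rightarrow> bool" where
  "sw_ok D x y \<longleftrightarrow> (\<forall>k<length D. x \<in> set (D!k) \<longleftrightarrow> y \<in> set (D!k))"

lemma sw_ss: "sw_ok D x y \<Longrightarrow> ss D (map (map (swap_ep x y)) D)"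
  unfolding ss_def sw_ok_def by (auto simp: swap_image)

lemma sw_ok_ss: "sw_ok D x y \<Longrightarrow> ss D D' \<Longrightarrow> sw_ok D' x y"
  unfolding ss_def sw_ok_def by auto

lemma adj_same:
  assumes "adj D x y"
  shows "\<exists>i<length D. x \<in> set (D!i) \<and> y \<in> set (D!i)"
proof -
  obtain w where w: "w \<in> set D" "cyc_adj w x y" using assms by (auto simp: adj_def)
  then have "x \<in> set w \<and> y \<in> set w" unfolding cyc_adj_def by auto
  moreover obtain i where "i < length D" "D!i = w" using w(1) by (auto simp: in_set_conv_nth)
  ultimately show ?thesis by blast
qed

lemma adj_sw_ok:
  assumes "gd_wf D" "adj D x y"
  shows "sw_ok D x y"
  unfolding sw_ok_def
proof (intro allI impI)
  fix k assume k: "k < length D"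
  obtain i where i: "i < length D" "x \<in> set (D!i)" "y \<in> set (D!i)" using adj_same[OF assms(2)] by blast
  show "x \<in> set (D!k) \<longleftrightarrow> y \<in> set (D!k)"
    using wf_word_unique[OF assms(1) i(1) k i(2)] wf_word_unique[OF assms(1) i(1) k i(3)] i by blast
qed

lemma sw_ok_sym: "sw_ok D x y \<Longrightarrow> sw_ok D y x" unfolding sw_ok_def by blast

lemma fh_inv: "gd_wf D \<Longrightarrow> fh D D' \<Longrightarrow> inv D' = inv D"
  unfolding fh_def using adj_sw_ok sw_ss ss_inv by blast

lemma ft_inv: "gd_wf D \<Longrightarrow> ft D D' \<Longrightarrow> inv D' = inv D"
  unfolding ft_def using adj_sw_ok sw_ss ss_inv by blast

lemma r3_inv:
  assumes "gd_wf D" "r3 D D'"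
  shows "inv D' = inv D"
proof -
  have "\<exists>p12 p13 p21 p23 p31 p32 (s1::int) (s2::int) (s3::int).
    (if s1 = 1 then adj D p21 p31 else adj D p31 p21) \<and>
    (if s2 = 1 then adj D p32 p12 else adj D p12 p32) \<and>
    (if s3 = 1 then adj D p13 p23 else adj D p23 p13) \<and>
    D' = map (map (swap_ep p21 p31 \<circ> swap_ep p12 p32 \<circ> swap_ep p13 p23)) D"
    using assms(2) unfolding r3_def by (elim exE conjE) (rule exI conjI | assumption)+
  then obtain p12 p13 p21 p23 p31 p32 s1 s2 s3 where
    a1: "if (s1::int) = 1 then adj D p21 p31 else adj D p31 p21" and
    a2: "if (s2::int) = 1 then adj D p32 p12 else adj D p12 p32" and
    a3: "if (s3::int) = 1 then adj D p13 p23 else adj D p23 p13" and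
    d: "D' = map (map (swap_ep p21 p31 \<circ> swap_ep p12 p32 \<circ> swap_ep p13 p23)) D"
    by blast
  have o1: "sw_ok D p21 p31" using a1 adj_sw_ok[OF assms(1)] sw_ok_sym by (auto split: if_splits)
  have o2: "sw_ok D p12 p32" using a2 adj_sw_ok[OF assms(1)] sw_ok_sym by (auto split: if_splits)
  have o3: "sw_ok D p13 p23" using a3 adj_sw_ok[OF assms(1)] sw_ok_sym by (auto split: if_splits)
  define D3 where "D3 = map (map (swap_ep p13 p23)) D"
  define D2 where "D2 = map (map (swap_ep p12 p32)) D3"
  have s3: "ss D D3" unfolding D3_def using sw_ss[OF o3] .
  have s2: "ss D3 D2" unfolding D2_def using sw_ss[OF sw_ok_ss[OF o2 s3]] .
  have s1: "ss D2 (map (map (swap_ep p21 p31)) D2)"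
    using sw_ss[OF sw_ok_ss[OF o1 ss_trans[OF s3 s2]]] .
  have "D' = map (map (swap_ep p21 p31)) D2" unfolding d D2_def D3_def by simp
  then show ?thesis using ss_inv ss_trans[OF ss_trans[OF s3 s2] s1] by simp
qed

lemma rot_inv:
  assumes "i < length D" "D' = D[i := rotate1 (D ! i)]"
  shows "inv D' = inv D"
  using assms by (intro ss_inv) (auto simp: ss_def nth_list_update)

definition rnm :: "(nat \<Rightarrow> nat) \<Rightarrow> endpt \<Rightarrow> endpt" where
  "rnm f e = (f (lbl e), sgn_of e, is_head e)"

lemma rnm_lam: "(\<lambda>(a, \<epsilon>, h). (f a, \<epsilon>, h)) = rnm f"
  by (auto simp: rnm_def lbl_def sgn_of_def is_head_def)

lemma rnm_simps [simp]: "lbl (rnm f e) = f (lbl e)" "sgn_of (rnm f e) = sgn_of e"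
  "rnm f (l, s, h) = (f l, s, h)" "lbl (l, s, h) = l" "sgn_of (l, s, h) = s"
  by (simp_all add: rnm_def lbl_def sgn_of_def is_head_def)

lemma ren_inv:
  assumes wf: "gd_wf D" and wf': "gd_wf D'" and inj: "inj_on f (labels D)"
    and d: "D' = map (map (rnm f)) D"
  shows "inv D' = inv D"
proof -
  have len: "length D' = length D" using d by simp
  have nth': "\<And>i. i < length D \<Longrightarrow> D'!i = map (rnm f) (D!i)" using d by simp
  have cD: "set (concat D') = rnm f ` set (concat D)"
    using d by (simp add: map_concat[symmetric])
  have lab: "labels D' = f ` labels D"
    unfolding labels_def cD image_image by simp
  have circ: "circ_of D' (rnm f x) = circ_of D x" if x: "x \<in> set (concat D)" for x
  proof -
    from x[unfolded in_concat_iff] obtain i where i: "i < length D" "x \<in> set (D!i)" by blast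
    then have "rnm f x \<in> set (D'!i)" using nth' by simp
    then have "circ_of D' (rnm f x) = i" using circ_of_eq[OF wf'] i(1) len by simp
    moreover have "circ_of D x = i" using circ_of_eq[OF wf i] .
    ultimately show ?thesis by simp
  qed
  have tq: "term_of D' j k (f l) = term_of D j k l" if l: "l \<in> labels D" for l j k
  proof -
    have t: "(l, sg D l, False) \<in> set (concat D)" and h: "(l, sg D l, True) \<in> set (concat D)"
      using ends_exist[OF wf l] by auto
    have "rnm f (l, sg D l, False) \<in> set (concat D')" unfolding cD using t by blast
    from sg_eq[OF wf' this] have sgq: "sg D' (f l) = sg D l" by simp
    have "tc D' (f l) = tc D l" unfolding tc_def sgq using circ[OF t] by simp
    moreover have "hc D' (f l) = hc D l" unfolding hc_def sgq using circ[OF h] by simp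
    ultimately show ?thesis unfolding term_of_def sgq by simp
  qed
  have "S D' j k = S D j k" for j k
  proof -
    have "S D' j k = (\<Sum>l\<in>f ` labels D. term_of D' j k l)" unfolding S_def lab ..
    also have "\<dots> = (\<Sum>l\<in>labels D. term_of D' j k (f l))" using sum.reindex[OF inj] by simp
    also have "\<dots> = S D j k" unfolding S_def using tq by (intro sum.cong) auto
    finally show ?thesis .
  qed
  then have e: "S D' = S D" by (intro ext)
  show ?thesis unfolding inv_def len e ..
qed

lemma rem_len [simp]: "length (remove_arrows A D) = length D"
  by (simp add: remove_arrows_def)

lemma rem_nth: "i < length D \<Longrightarrow> remove_arrows A D ! i = filter (\<lambda>e. lbl e \<notin> A) (D!i)"
  by (simp add: remove_arrows_def)

lemma rem_concat: "x \<in> set (concat (remove_arrows A D)) \<longleftrightarrow> x \<in> set (concat D) \<and> lbl x \<notin> A"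
  unfolding in_concat_iff by (auto simp: rem_nth)

lemma rem_circ:
  assumes "lbl x \<notin> A"
  shows "circ_of (remove_arrows A D) x = circ_of D x"
proof -
  have "\<And>k. (k < length (remove_arrows A D) \<and> x \<in> set (remove_arrows A D ! k)) =
            (k < length D \<and> x \<in> set (D ! k))"
    using assms by (auto simp: rem_nth)
  then show ?thesis unfolding circ_of_def by simp
qed

lemma rem_S:
  assumes wf: "gd_wf D" and wf': "gd_wf (remove_arrows A D)"
  shows "S (remove_arrows A D) j k = S D j k - (\<Sum>l\<in>labels D \<inter> A. term_of D j k l)"
proof -
  let ?R = "remove_arrows A D"
  have lab: "labels ?R = labels D - A"
  proof -
    have "set (concat ?R) = {x \<in> set (concat D). lbl x \<notin> A}"
    proof (rule set_eqI)
      fix x show "x \<in> set (concat ?R) \<longleftrightarrow> x \<in> {x \<in> set (concat D). lbl x \<notin> A}"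
        unfolding mem_Collect_eq by (rule rem_concat)
    qed
    then show ?thesis unfolding labels_def by auto
  qed
  have tq: "term_of ?R j k l = term_of D j k l" if l: "l \<in> labels D - A" for l
  proof -
    have t: "(l, sg D l, False) \<in> set (concat D)"
      using ends_exist[OF wf] l by auto
    then have "(l, sg D l, False) \<in> set (concat ?R)" using l rem_concat by auto
    from sg_eq[OF wf' this] have sgq: "sg ?R l = sg D l" by simp
    have "tc ?R l = tc D l" unfolding tc_def sgq using rem_circ l by simp
    moreover have "hc ?R l = hc D l" unfolding hc_def sgq using rem_circ l by simp
    ultimately show ?thesis unfolding term_of_def sgq by simp
  qed
  have "S ?R j k = (\<Sum>l\<in>labels D - A. term_of D j k l)"
    unfolding S_def lab using tq by (intro sum.cong) auto
  also have "labels D - A = labels D - (labels D \<inter> A)" by auto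
  also have "(\<Sum>l\<in>labels D - (labels D \<inter> A). term_of D j k l) = S D j k - (\<Sum>l\<in>labels D \<inter> A. term_of D j k l)"
    unfolding S_def by (rule sum_diff) (auto simp: finite_labels)
  finally show ?thesis .
qed

lemma adj2_same:
  assumes "adj2 D x y"
  shows "\<exists>i<length D. x \<in> set (D!i) \<and> y \<in> set (D!i)"
  using assms adj_same unfolding adj2_def by blast

lemma inv_eqI:
  assumes "length D' = length D" "\<And>j k. j \<noteq> k \<Longrightarrow> S D' j k = S D j k"
  shows "inv D' = inv D"
proof -
  have "(\<lambda>j k. if j = k then 0 else S D' j k) = (\<lambda>j k. if j = k then 0 else S D j k)"
    using assms(2) by (intro ext) auto
  then show ?thesis unfolding inv_def assms(1) by simp
qed

lemma labels_I: "e \<in> set (concat D) \<Longrightarrow> lbl e \<in> labels D"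
  by (simp add: labels_def)

lemma in_word_concat: "i < length D \<Longrightarrow> x \<in> set (D!i) \<Longrightarrow> x \<in> set (concat D)"
  unfolding in_concat_iff by blast

lemma r1_inv:
  assumes wf: "gd_wf D" and wf': "gd_wf D'" and r: "r1_del D D'"
  shows "inv D' = inv D"
proof -
  obtain a \<epsilon> where ad: "adj2 D (a, \<epsilon>, True) (a, \<epsilon>, False)" and d: "D' = remove_arrows {a} D"
    using r unfolding r1_del_def by blast
  obtain i where i: "i < length D" "(a, \<epsilon>, True) \<in> set (D!i)" "(a, \<epsilon>, False) \<in> set (D!i)"
    using adj2_same[OF ad] by blast
  have hc: "(a, \<epsilon>, True) \<in> set (concat D)" using in_word_concat[OF i(1,2)] .
  have la: "a \<in> labels D" using labels_I[OF hc] by simp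
  have sa: "sg D a = \<epsilon>" using sg_eq[OF wf hc] by simp
  have "tc D a = i" unfolding tc_def sa using circ_of_eq[OF wf i(1,3)] .
  moreover have "hc D a = i" unfolding hc_def sa using circ_of_eq[OF wf i(1,2)] .
  ultimately have z: "j \<noteq> k \<Longrightarrow> term_of D j k a = 0" for j k unfolding term_of_def by auto
  have li: "labels D \<inter> {a} = {a}" using la by auto
  show ?thesis
  proof (rule inv_eqI)
    show "length D' = length D" using d by simp
    fix j k :: nat assume "j \<noteq> k"
    then show "S D' j k = S D j k"
      using rem_S[OF wf wf'[unfolded d], of j k] d li z by simp
  qed
qed

lemma r2_inv:
  assumes wf: "gd_wf D" and wf': "gd_wf D'" and r: "r2_del D D'"
  shows "inv D' = inv D"
proof -
  obtain a b \<epsilon> where ab: "a \<noteq> b" and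
    ad1: "adj2 D (a, \<epsilon>, True) (b, -\<epsilon>, True)" and
    ad2: "adj2 D (a, \<epsilon>, False) (b, -\<epsilon>, False)" and d: "D' = remove_arrows {a, b} D"
    using r unfolding r2_del_def by blast
  obtain k0 where k0: "k0 < length D" "(a, \<epsilon>, True) \<in> set (D!k0)" "(b, -\<epsilon>, True) \<in> set (D!k0)"
    using adj2_same[OF ad1] by blast
  obtain i0 where i0: "i0 < length D" "(a, \<epsilon>, False) \<in> set (D!i0)" "(b, -\<epsilon>, False) \<in> set (D!i0)"
    using adj2_same[OF ad2] by blast
  have ca: "(a, \<epsilon>, True) \<in> set (concat D)" using in_word_concat[OF k0(1,2)] .
  have cb: "(b, -\<epsilon>, True) \<in> set (concat D)" using in_word_concat[OF k0(1,3)] .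
  have la: "a \<in> labels D" using labels_I[OF ca] by simp
  have lb: "b \<in> labels D" using labels_I[OF cb] by simp
  have sa: "sg D a = \<epsilon>" using sg_eq[OF wf ca] by simp
  have sb: "sg D b = -\<epsilon>" using sg_eq[OF wf cb] by simp
  have "tc D a = i0" unfolding tc_def sa using circ_of_eq[OF wf i0(1,2)] .
  moreover have "hc D a = k0" unfolding hc_def sa using circ_of_eq[OF wf k0(1,2)] .
  moreover have "tc D b = i0" unfolding tc_def sb using circ_of_eq[OF wf i0(1,3)] .
  moreover have "hc D b = k0" unfolding hc_def sb using circ_of_eq[OF wf k0(1,3)] .
  ultimately have z: "term_of D j k a + term_of D j k b = 0" for j k
    unfolding term_of_def sa sb by auto
  have li: "labels D \<inter> {a, b} = {a, b}" using la lb by auto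
  show ?thesis
  proof (rule inv_eqI)
    show "length D' = length D" using d by simp
    fix j k :: nat
    show "S D' j k = S D j k"
      using rem_S[OF wf wf'[unfolded d], of j k] d li z[of j k] ab by simp
  qed
qed

lemma reid_inv:
  assumes "reid_step D D'"
  shows "inv D' = inv D"
proof -
  have wf: "gd_wf D" and wf': "gd_wf D'" using assms by (auto simp: reid_step_def)
  consider (iso) "gd_iso D D'" | (r1) "r1_del D D'" | (r2) "r2_del D D'" | (r3) "r3 D D'"
    using assms by (auto simp: reid_step_def)
  then show ?thesis
  proof cases
    case iso
    then consider (rot) i where "i < length D" "D' = D[i := rotate1 (D ! i)]"
      | (ren) f where "inj_on f (labels D)" "D' = map (map (rnm f)) D"
      unfolding gd_iso_def rnm_lam labels_def by blast
    then show ?thesis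
    proof cases
      case rot then show ?thesis using rot_inv by blast
    next
      case ren then show ?thesis using ren_inv[OF wf wf'] by blast
    qed
  next
    case r1 then show ?thesis using r1_inv[OF wf wf'] by blast
  next
    case r2 then show ?thesis using r2_inv[OF wf wf'] by blast
  next
    case r3 then show ?thesis using r3_inv[OF wf] by blast
  qed
qed

lemma forb_inv:
  assumes "forb_step D D'"
  shows "inv D' = inv D"
  using assms reid_inv fh_inv ft_inv unfolding forb_step_def by blast

lemma forb_equiv_inv:
  assumes "forb_equiv D D'"
  shows "inv D' = inv D"
proof -
  have "(symclp forb_step)\<^sup>*\<^sup>* D D'" using assms by (simp add: forb_equiv_def equivclp_def)
  then show ?thesis
  proof (induction rule: rtranclp_induct)
    case (step y z)
    then have "inv z = inv y" using forb_inv unfolding symclp_def by (metis sup2E conversepD)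
    then show ?case using step.IH by simp
  qed simp
qed

lemma reid_forb: "reid_equiv D D' \<Longrightarrow> forb_equiv D D'"
proof -
  have "reid_step \<le> forb_step" by (auto simp: forb_step_def)
  then have "equivclp reid_step \<le> equivclp forb_step"
    unfolding equivclp_def by (intro rtranclp_mono) (auto simp: symclp_def)
  then show "reid_equiv D D' \<Longrightarrow> forb_equiv D D'" unfolding reid_equiv_def forb_equiv_def by blast
qed

definition hmap :: "gdiag \<Rightarrow> nat \<Rightarrow> endpt \<Rightarrow> nat \<times> nat \<times> int" where
  "hmap R j e = (j, circ_of R (lbl e, sgn_of e, True), sgn_of e)"

lemma arrow_list_alt:
  "arrow_list R = concat (map (\<lambda>j. map (hmap R j) (filter (\<lambda>e. \<not> is_head e) (R ! j))) [0..<length R])"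
  unfolding arrow_list_def hmap_def[abs_def] ..

lemma arrow_mem:
  assumes wf: "gd_wf R" and l: "l \<in> labels R"
  shows "(tc R l, hc R l, sg R l) \<in> set (arrow_list R)"
proof -
  let ?t = "(l, sg R l, False)"
  have t: "?t \<in> set (concat R)" using ends_exist[OF wf l] by blast
  from t[unfolded in_concat_iff] obtain i where i: "i < length R" "?t \<in> set (R!i)" by blast
  have tc: "tc R l = i" unfolding tc_def using circ_of_eq[OF wf i] .
  have fA: "hmap R i ?t = (tc R l, hc R l, sg R l)"
    unfolding hmap_def tc hc_def by (simp add: lbl_def sgn_of_def)
  have fB: "hmap R i ?t \<in> set (map (hmap R i) (filter (\<lambda>e. \<not> is_head e) (R ! i)))"
    using i(2) by (simp add: is_head_def)
  have fC: "map (hmap R i) (filter (\<lambda>e. \<not> is_head e) (R ! i)) \<in>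
      set (map (\<lambda>j. map (hmap R j) (filter (\<lambda>e. \<not> is_head e) (R ! j))) [0..<length R])"
    using i(1) by simp
  have "hmap R i ?t \<in> set (arrow_list R)" unfolding arrow_list_alt set_concat
    by (rule UN_I[where B=set, OF fC fB])
  then show ?thesis unfolding fA .
qed

definition Cset :: "gdiag \<Rightarrow> nat \<Rightarrow> nat \<Rightarrow> int \<Rightarrow> nat set" where
  "Cset R j k \<epsilon> = {l \<in> labels R. tc R l = j \<and> hc R l = k \<and> sg R l = \<epsilon>}"

lemma count_quiver:
  assumes wf: "gd_wf R"
  shows "count (quiver R) (j, k, \<epsilon>) = card (Cset R j k \<epsilon>)"
proof -
  let ?n = "length R"
  let ?Q = "\<lambda>e. \<not> is_head e \<and> circ_of R (lbl e, sgn_of e, True) = k \<and> sgn_of e = \<epsilon>"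
  let ?F = "\<lambda>j. map (hmap R j) (filter (\<lambda>e. \<not> is_head e) (R ! j))"
  have g: "count_list (?F j') (j, k, \<epsilon>) = (if j' = j then length (filter ?Q (R!j)) else 0)" for j'
  proof -
    have "count_list (?F j') (j, k, \<epsilon>) = length (filter (\<lambda>e. \<not> is_head e \<and> (j, k, \<epsilon>) = hmap R j' e) (R ! j'))"
      by (simp add: count_list_eq_length_filter filter_map o_def)
    also have "(\<lambda>e. \<not> is_head e \<and> (j, k, \<epsilon>) = hmap R j' e) = (\<lambda>e. j' = j \<and> ?Q e)"
      by (auto simp: hmap_def)
    finally show ?thesis by (cases "j' = j") simp_all
  qed
  have "count (quiver R) (j, k, \<epsilon>) = count_list (arrow_list R) (j, k, \<epsilon>)"
    unfolding quiver_def count_mset ..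
  also have "\<dots> = (\<Sum>j'<?n. count_list (?F j') (j, k, \<epsilon>))"
    unfolding arrow_list_alt count_concat by simp
  also have "\<dots> = (\<Sum>j'<?n. if j' = j then length (filter ?Q (R!j)) else 0)"
    unfolding g ..
  also have "\<dots> = (if j < ?n then length (filter ?Q (R!j)) else 0)"
    by (simp add: sum.delta')
  also have "\<dots> = card (Cset R j k \<epsilon>)"
  proof (cases "j < ?n")
    case True
    have "length (filter ?Q (R!j)) = card ({e. ?Q e} \<inter> set (R!j))"
      using distinct_length_filter[OF wf_distinct[OF wf True]] .
    also have "\<dots> = card (lbl ` ({e. ?Q e} \<inter> set (R!j)))"
    proof (rule card_image[symmetric], rule inj_onI)
      fix x y assume x: "x \<in> {e. ?Q e} \<inter> set (R!j)" and y: "y \<in> {e. ?Q e} \<inter> set (R!j)"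
        and xy: "lbl x = lbl y"
      have cx: "x \<in> set (concat R)" using x in_word_concat[OF True] by blast
      have cy: "y \<in> set (concat R)" using y in_word_concat[OF True] by blast
      have "sgn_of x = sgn_of y" using sg_eq[OF wf cx] sg_eq[OF wf cy] xy by simp
      moreover have "is_head x = is_head y" using x y by simp
      ultimately show "x = y" using xy ep_eta[of x] ep_eta[of y] by simp
    qed
    also have "lbl ` ({e. ?Q e} \<inter> set (R!j)) = Cset R j k \<epsilon>"
    proof
      show "lbl ` ({e. ?Q e} \<inter> set (R!j)) \<subseteq> Cset R j k \<epsilon>"
      proof
        fix l assume "l \<in> lbl ` ({e. ?Q e} \<inter> set (R!j))"
        then obtain e where e: "?Q e" "e \<in> set (R!j)" "l = lbl e" by blast
        have ce: "e \<in> set (concat R)" using in_word_concat[OF True e(2)] .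
        have se: "sg R l = sgn_of e" using sg_eq[OF wf ce] e(3) by simp
        have ee: "e = (l, sg R l, False)" using ep_eta[of e] e(1,3) se by simp
        have "tc R l = j" unfolding tc_def using circ_of_eq[OF wf True e(2)] ee by simp
        moreover have "hc R l = k"
        proof -
          have "circ_of R (lbl e, sgn_of e, True) = k" using e(1) by blast
          then show ?thesis unfolding hc_def using e(3) se by simp
        qed
        moreover have "l \<in> labels R" using labels_I[OF ce] e(3) by simp
        ultimately show "l \<in> Cset R j k \<epsilon>" unfolding Cset_def using e(1) se by simp
      qed
      show "Cset R j k \<epsilon> \<subseteq> lbl ` ({e. ?Q e} \<inter> set (R!j))"
      proof
        fix l assume l: "l \<in> Cset R j k \<epsilon>"
        then have lR: "l \<in> labels R" and tcl: "tc R l = j" and hcl: "hc R l = k" and sgl: "sg R l = \<epsilon>"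
          unfolding Cset_def by auto
        let ?t = "(l, sg R l, False)"
        have t: "?t \<in> set (concat R)" using ends_exist[OF wf lR] by blast
        from t[unfolded in_concat_iff] obtain i where i: "i < length R" "?t \<in> set (R!i)" by blast
        have "i = j" using circ_of_eq[OF wf i] tcl unfolding tc_def by simp
        then have "?t \<in> set (R!j)" using i by simp
        moreover have "?Q ?t" using hcl sgl unfolding hc_def by (simp add: is_head_def lbl_def sgn_of_def)
        ultimately have "?t \<in> {e. ?Q e} \<inter> set (R!j)" by blast
        then show "l \<in> lbl ` ({e. ?Q e} \<inter> set (R!j))" by (rule rev_image_eqI) (simp add: lbl_def)
      qed
    qed
    finally show ?thesis using True by simp
  next
    case False
    have "Cset R j k \<epsilon> = {}"
    proof (rule ccontr)
      assume "Cset R j k \<epsilon> \<noteq> {}"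
      then obtain l where l: "l \<in> labels R" "tc R l = j" unfolding Cset_def by auto
      have "(l, sg R l, False) \<in> set (concat R)" using ends_exist[OF wf l(1)] by blast
      from circ_of_lt[OF this] l(2) False show False unfolding tc_def by simp
    qed
    then show ?thesis using False by simp
  qed
  finally show ?thesis .
qed

lemma reduced_count:
  assumes red: "reduced R"
  shows "count (quiver R) (j, k, \<epsilon>) =
    (if j = k then 0 else if \<epsilon> = 1 then nat (S R j k) else if \<epsilon> = -1 then nat (- S R j k) else 0)"
proof -
  have wf: "gd_wf R" using red by (simp add: reduced_def)
  have H1: "\<forall>(j, k, \<epsilon>) \<in> set (arrow_list R). j \<noteq> k"
    using red[unfolded reduced_def] by (rule conjunct1[OF conjunct2])
  have H2: "\<forall>(j, k, \<epsilon>) \<in> set (arrow_list R). \<forall>(j', k', \<epsilon>') \<in> set (arrow_list R).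
         j = j' \<and> k = k' \<longrightarrow> \<epsilon> = \<epsilon>'"
    using red[unfolded reduced_def] by (rule conjunct2[OF conjunct2])
  have P1: "tc R l \<noteq> hc R l" if "l \<in> labels R" for l
    using bspec[OF H1 arrow_mem[OF wf that]] by simp
  have P2: "sg R l = sg R l'" if "l \<in> labels R" "l' \<in> labels R" "tc R l = tc R l'" "hc R l = hc R l'" for l l'
  proof -
    from bspec[OF H2 arrow_mem[OF wf that(1)]]
    have "\<forall>(j', k', \<epsilon>') \<in> set (arrow_list R). tc R l = j' \<and> hc R l = k' \<longrightarrow> sg R l = \<epsilon>'"
      by simp
    from bspec[OF this arrow_mem[OF wf that(2)]] show ?thesis using that(3,4) by simp
  qed
  have P3: "sg R l \<in> {1, -1}" if "l \<in> labels R" for l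
  proof -
    have t: "(l, sg R l, False) \<in> set (concat R)" using ends_exist[OF wf that] by blast
    show ?thesis using sg_pm[OF wf t] by (simp add: sgn_of_def)
  qed
  define L where "L = {l \<in> labels R. tc R l = j \<and> hc R l = k}"
  have finL: "finite L" unfolding L_def using finite_labels by simp
  have SL: "S R j k = (\<Sum>l\<in>L. sg R l)"
    unfolding S_def term_of_def L_def by (simp add: sum.inter_filter finite_labels)
  have CL: "Cset R j k \<epsilon> = {l \<in> L. sg R l = \<epsilon>}" unfolding Cset_def L_def by auto
  show ?thesis
  proof (cases "j = k")
    case True
    then have "Cset R j k \<epsilon> = {}" unfolding Cset_def using P1 by auto
    then show ?thesis using count_quiver[OF wf] True by simp
  next
    case jk: False
    show ?thesis
    proof (cases "L = {}")
      case True
      then show ?thesis using count_quiver[OF wf, of j k \<epsilon>] CL SL jk by simp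
    next
      case False
      then obtain l0 where l0: "l0 \<in> L" by blast
      have allL: "sg R l = sg R l0" if "l \<in> L" for l
        using P2[of l l0] that l0 unfolding L_def by auto
      have S': "S R j k = of_nat (card L) * sg R l0"
        unfolding SL using allL by simp
      have C': "Cset R j k \<epsilon> = (if \<epsilon> = sg R l0 then L else {})"
        unfolding CL using allL by auto
      have cnt: "count (quiver R) (j, k, \<epsilon>) = (if \<epsilon> = sg R l0 then card L else 0)"
        using count_quiver[OF wf, of j k \<epsilon>] C' by simp
      have "sg R l0 \<in> {1, -1}" using P3 l0 unfolding L_def by blast
      then consider "sg R l0 = 1" | "sg R l0 = -1" by blast
      then show ?thesis
      proof cases
        case 1
        then show ?thesis unfolding cnt S' using jk by simp
      next
        case 2
        then show ?thesis unfolding cnt S' using jk by simp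
      qed
    qed
  qed
qed

theorem mainTheorem1:
  fixes D1 D2 R1 R2 :: gdiag
  assumes "gd_wf D1" and "gd_wf D2"
    and "reid_equiv D1 D2"
    and "forb_equiv D1 R1" and "reduced R1"
    and "forb_equiv D2 R2" and "reduced R2"
  shows "quiver R1 = quiver R2"
proof -
  have "inv R1 = inv D1" using forb_equiv_inv[OF assms(4)] .
  moreover have "inv D2 = inv D1" using forb_equiv_inv[OF reid_forb[OF assms(3)]] .
  moreover have "inv R2 = inv D2" using forb_equiv_inv[OF assms(6)] .
  ultimately have iv: "inv R1 = inv R2" by simp
  have f: "snd (inv R1) j k = snd (inv R2) j k" for j k using iv by simp
  have e: "S R1 j k = S R2 j k" if "j \<noteq> k" for j k
    using f[of j k] that unfolding inv_def by simp
  show ?thesis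
  proof (rule multiset_eqI)
    fix x :: "nat \<times> nat \<times> int"
    obtain j k \<epsilon> where x: "x = (j, k, \<epsilon>)" by (cases x) auto
    show "count (quiver R1) x = count (quiver R2) x"
      unfolding x reduced_count[OF assms(5)] reduced_count[OF assms(7)] using e[of j k] by simp
  qed
qed

end
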